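(* Let $k\geq 3$ and let $n=4k-3$ be the number of vertices of the basket graph $\mathsf{B}_k$, with distance matrix $D$. Then there exists $\vec x\in\mathbb{R}^n$ such that $$\vec 1^\top\vec x=1,\qquad D\vec x=\frac{(-3)^k+4k-1}{8}\,\vec 1.$$
   Context: For a connected graph $G$ on vertices $v_1,\dots,v_n$, its distance matrix is $D=(d(v_i,v_j))_{i,j=1}^n$, where $d$ is the shortest-path distance; $\vec 1$ denotes the all-ones vector. Basket graph: for $k\geq1$, take disjoint copies of the path graphs $\mathsf{P}_k,\mathsf{P}_{k+1},\mathsf{P}_{k+1},\mathsf{P}_{k+1}$ ($\mathsf{P}_m$ is the path on $m$ vertices), and identify all four first endpoints into one vertex and all four last endpoints into another vertex (creating two vertices of degree four); the result is the $k$-th basket graph $\mathsf{B}_k$, with $4k-3$ vertices. *)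

theory Defs
  imports Complex_Main
begin

definition path_edges_adj :: "nat list list \<Rightarrow> nat \<Rightarrow> nat \<Rightarrow> bool" where
  "path_edges_adj ps u v \<longleftrightarrow>
     (\<exists>p \<in> set ps. \<exists>i. Suc i < length p \<and>
        ((p ! i = u \<and> p ! Suc i = v) \<or> (p ! i = v \<and> p ! Suc i = u)))"

definition graph_dist :: "('a \<Rightarrow> 'a \<Rightarrow> bool) \<Rightarrow> 'a \<Rightarrow> 'a \<Rightarrow> nat" where
  "graph_dist E u v = (LEAST m. (E ^^ m) u v)"

text \<open>Basket graph B_k on vertex set {0..<4k-3}: vertex 0 and vertex 1 are the two
  identified endpoints; the path P_k is 0,2,3,...,k-1,1; the three paths P_(k+1) are
  0, s, s+1, ..., s+k-2, 1 with s = k + j(k-1), j = 0,1,2.\<close>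
definition basket_paths :: "nat \<Rightarrow> nat list list" where
  "basket_paths k =
     ([0] @ [2..<k] @ [1]) #
     map (\<lambda>j. [0] @ [k + j*(k-1) ..< k + (j+1)*(k-1)] @ [1]) [0..<3]"

definition basket_adj :: "nat \<Rightarrow> nat \<Rightarrow> nat \<Rightarrow> bool" where
  "basket_adj k = path_edges_adj (basket_paths k)"

definition basket_n :: "nat \<Rightarrow> nat" where
  "basket_n k = 4*k - 3"

definition basket_D :: "nat \<Rightarrow> nat \<Rightarrow> nat \<Rightarrow> real" where
  "basket_D k i j = real (graph_dist (basket_adj k) i j)"

end

theory Submission
  imports Defs
begin

definition dabs :: "nat \<Rightarrow> nat \<Rightarrow> nat" where
  "dabs a b = (if a \<le> b then b - a else a - b)"

definition QQ :: "nat \<Rightarrow> real" where "QQ m = (1 - (-3)^m)/4"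
definition PP :: "nat \<Rightarrow> real" where "PP m = (-3 - (4*real m - 3)*(-3)^m)/16"

lemma geomQ: "(\<Sum>b<m. (-3::real)^b) = QQ m"
  by (induction m) (simp_all add: QQ_def field_simps)

lemma geomP: "(\<Sum>b<m. real b * (-3::real)^b) = PP m"
  by (induction m) (simp_all add: PP_def field_simps)

lemma sum_split_at: "(c::nat) \<le> N \<Longrightarrow> (\<Sum>b<N. f b) = (\<Sum>b<c. f b) + (\<Sum>b\<in>{c..<N}. f b)"
  using sum.atLeastLessThan_concat[of 0 c N f] by (simp add: atLeast0LessThan)

lemma geomQ': "c \<le> N \<Longrightarrow> (\<Sum>b\<in>{c..<N}. (-3::real)^b) = QQ N - QQ c"
  using sum_split_at[of c N "\<lambda>b. (-3::real)^b"] geomQ by simp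

lemma geomP': "c \<le> N \<Longrightarrow> (\<Sum>b\<in>{c..<N}. real b * (-3::real)^b) = PP N - PP c"
  using sum_split_at[of c N "\<lambda>b. real b * (-3::real)^b"] geomP by simp

lemma lin_sum: "(\<Sum>b\<in>A. (u + v * real b) * (-3::real)^b) = u * (\<Sum>b\<in>A. (-3::real)^b) + v * (\<Sum>b\<in>A. real b * (-3::real)^b)"
  by (simp add: algebra_simps sum.distrib sum_distrib_left)

definition SA :: "nat \<Rightarrow> nat \<Rightarrow> real" where
  "SA N c = (\<Sum>b<N. real (dabs c b) * (-3)^b)"

definition SM :: "nat \<Rightarrow> nat \<Rightarrow> nat \<Rightarrow> nat \<Rightarrow> real" where
  "SM K N c e = (\<Sum>b<N. real (min (c+b+e) (2*K-c-b)) * (-3)^b)"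

lemma SA_closed: assumes "c \<le> N"
  shows "SA N c = real c * QQ c - PP c + (PP N - PP c) - real c * (QQ N - QQ c)"
proof -
  have "SA N c = (\<Sum>b<c. real (dabs c b) * (-3)^b) + (\<Sum>b\<in>{c..<N}. real (dabs c b) * (-3)^b)"
    unfolding SA_def using sum_split_at[OF assms] by blast
  also have "(\<Sum>b<c. real (dabs c b) * (-3::real)^b) = (\<Sum>b<c. (real c + (-1) * real b) * (-3)^b)"
    by (rule sum.cong) (auto simp: dabs_def of_nat_diff)
  also have "(\<Sum>b\<in>{c..<N}. real (dabs c b) * (-3::real)^b) = (\<Sum>b\<in>{c..<N}. (- real c + 1 * real b) * (-3)^b)"
    by (rule sum.cong) (auto simp: dabs_def of_nat_diff)
  finally show ?thesis unfolding lin_sum using geomQ geomP geomQ'[OF assms] geomP'[OF assms]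
    by (simp add: algebra_simps)
qed

lemma SM_closed: assumes "c \<le> K" "K - c \<le> N" "N \<le> K + 1" "1 \<le> e" "e \<le> 2"
  shows "SM K N c e = (real c + real e) * QQ (K-c) + PP (K-c) + (2*real K - real c) * (QQ N - QQ (K-c)) - (PP N - PP (K-c))"
proof -
  have "SM K N c e = (\<Sum>b<K-c. real (min (c+b+e) (2*K-c-b)) * (-3)^b) + (\<Sum>b\<in>{K-c..<N}. real (min (c+b+e) (2*K-c-b)) * (-3)^b)"
    unfolding SM_def using sum_split_at[OF assms(2)] by blast
  also have "(\<Sum>b<K-c. real (min (c+b+e) (2*K-c-b)) * (-3::real)^b) = (\<Sum>b<K-c. (real c + real e + 1 * real b) * (-3)^b)"
    by (rule sum.cong) (use assms in \<open>auto simp: of_nat_diff min_def\<close>)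
  also have "(\<Sum>b\<in>{K-c..<N}. real (min (c+b+e) (2*K-c-b)) * (-3::real)^b) = (\<Sum>b\<in>{K-c..<N}. (2*real K - real c + (-1) * real b) * (-3)^b)"
    by (rule sum.cong) (use assms in \<open>auto simp: of_nat_diff min_def\<close>)
  finally show ?thesis unfolding lin_sum using geomQ geomP geomQ'[OF assms(2)] geomP'[OF assms(2)]
    by (simp add: algebra_simps)
qed

lemma identI: assumes "c \<le> K"
  shows "(SA (K+1) c + SA (K+1) (K-c))/2 + 3/2*(SM K K c 1 + SM K K (K-c) 1)
     = ((-3)^(K+1) + 4*real K + 3)/8"
proof -
  obtain m where K: "K = c + m" using assms le_Suc_ex by blast
  have e1: "K - c = m" "K - m = c" using K by auto
  show ?thesis
    apply (subst SA_closed, use assms in simp)+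
    apply (subst SM_closed, use assms in simp_all)+
    unfolding e1 unfolding K QQ_def PP_def
    by (simp add: power_add field_simps)
qed

lemma identII: assumes "c < K"
  shows "(SM K (K+1) c 1 + SM K (K+1) (K-1-c) 1)/2 + (SA K c + SA K (K-1-c))/2 + (SM K K c 2 + SM K K (K-1-c) 2)
     = ((-3)^(K+1) + 4*real K + 3)/8"
proof -
  obtain m where K: "K = c + m + 1" using assms by (metis add.commute add_Suc_right less_iff_Suc_add plus_1_eq_Suc)
  have e1: "K - 1 - c = m" "K - m = c + 1" "K - c = m + 1" "K - (K - 1 - c) = c + 1" using K by auto
  show ?thesis
    apply (subst SA_closed, use assms in simp)+
    apply (subst SM_closed, use assms in simp_all)+
    unfolding e1 unfolding K QQ_def PP_def
    by (simp add: power_add field_simps)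
qed

definition xs :: "nat \<Rightarrow> nat \<Rightarrow> real" where "xs K a = ((-3)^a + (-3)^(K-a))/2"
definition xl :: "nat \<Rightarrow> nat \<Rightarrow> real" where "xl K b = ((-3)^b + (-3)^(K-1-b))/2"

lemma reflsum: "(\<Sum>a<Suc M. g a * (-3::real)^(M-a)) = (\<Sum>a<Suc M. g (M-a) * (-3)^a)"
proof -
  have "(\<Sum>a<Suc M. g a * (-3::real)^(M-a)) = (\<Sum>a<Suc M. g (Suc M - Suc a) * (-3::real)^(M-(Suc M - Suc a)))"
    by (rule sum.nat_diff_reindex[symmetric])
  also have "\<dots> = (\<Sum>a<Suc M. g (M-a) * (-3)^a)"
    by (rule sum.cong) auto
  finally show ?thesis .
qed

lemma split_x: "(\<Sum>a\<in>A. g a * (((-3::real)^a + (-3)^(h a))/2)) = ((\<Sum>a\<in>A. g a * (-3)^a) + (\<Sum>a\<in>A. g a * (-3)^(h a)))/2"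
  by (simp add: sum.distrib sum_divide_distrib[symmetric] algebra_simps)

lemma posI: assumes "c \<le> K" "1 \<le> K"
  shows "(\<Sum>a<K+1. real (dabs c a) * xs K a) + 3 * (\<Sum>b<K. real (min (c+b+1) (2*K-c-b)) * xl K b)
     = ((-3)^(K+1) + 4*real K + 3)/8"
proof -
  have K1: "K = Suc (K-1)" using assms by simp
  have a: "(\<Sum>a<K+1. real (dabs c a) * xs K a) = (SA (K+1) c + SA (K+1) (K-c))/2"
  proof -
    have "(\<Sum>a<Suc K. real (dabs c a) * (-3::real)^(K-a)) = (\<Sum>a<Suc K. real (dabs c (K-a)) * (-3)^a)"
      by (rule reflsum)
    also have "\<dots> = SA (K+1) (K-c)" unfolding SA_def
      by (rule sum.cong) (use assms in \<open>auto simp: dabs_def\<close>)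
    finally show ?thesis unfolding xs_def split_x by (simp add: SA_def)
  qed
  have b: "(\<Sum>b<K. real (min (c+b+1) (2*K-c-b)) * xl K b) = (SM K K c 1 + SM K K (K-c) 1)/2"
  proof -
    have "(\<Sum>b<Suc (K-1). real (min (c+b+1) (2*K-c-b)) * (-3::real)^(K-1-b))
        = (\<Sum>b<Suc (K-1). real (min (c+(K-1-b)+1) (2*K-c-(K-1-b))) * (-3)^b)"
      by (rule reflsum)
    also have "\<dots> = SM K K (K-c) 1" unfolding SM_def
      by (subst K1[symmetric], rule sum.cong) (use assms in \<open>auto simp: min_def\<close>)
    finally have "(\<Sum>b<K. real (min (c+b+1) (2*K-c-b)) * (-3::real)^(K-1-b)) = SM K K (K-c) 1"
      using K1 by metis
    then show ?thesis unfolding xl_def split_x by (simp add: SM_def)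
  qed
  show ?thesis unfolding a b using identI[OF assms(1)] by simp
qed

lemma posII: assumes "c < K"
  shows "(\<Sum>a<K+1. real (min (c+a+1) (2*K-c-a)) * xs K a) + (\<Sum>b<K. real (dabs c b) * xl K b)
     + 2 * (\<Sum>b<K. real (min (c+b+2) (2*K-c-b)) * xl K b)
     = ((-3)^(K+1) + 4*real K + 3)/8"
proof -
  have K1: "K = Suc (K-1)" using assms by simp
  have a: "(\<Sum>a<K+1. real (min (c+a+1) (2*K-c-a)) * xs K a) = (SM K (K+1) c 1 + SM K (K+1) (K-1-c) 1)/2"
  proof -
    have "(\<Sum>a<Suc K. real (min (c+a+1) (2*K-c-a)) * (-3::real)^(K-a)) = (\<Sum>a<Suc K. real (min (c+(K-a)+1) (2*K-c-(K-a))) * (-3)^a)"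
      by (rule reflsum)
    also have "\<dots> = SM K (K+1) (K-1-c) 1" unfolding SM_def
      by (rule sum.cong) (use assms in \<open>auto simp: min_def\<close>)
    finally show ?thesis unfolding xs_def split_x by (simp add: SM_def)
  qed
  have b: "(\<Sum>b<K. real (dabs c b) * xl K b) = (SA K c + SA K (K-1-c))/2"
  proof -
    have "(\<Sum>b<Suc (K-1). real (dabs c b) * (-3::real)^(K-1-b))
        = (\<Sum>b<Suc (K-1). real (dabs c (K-1-b)) * (-3)^b)"
      by (rule reflsum)
    also have "\<dots> = SA K (K-1-c)" unfolding SA_def
      by (subst K1[symmetric], rule sum.cong) (use assms in \<open>auto simp: dabs_def\<close>)
    finally have "(\<Sum>b<K. real (dabs c b) * (-3::real)^(K-1-b)) = SA K (K-1-c)"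
      using K1 by metis
    then show ?thesis unfolding xl_def split_x by (simp add: SA_def)
  qed
  have d: "(\<Sum>b<K. real (min (c+b+2) (2*K-c-b)) * xl K b) = (SM K K c 2 + SM K K (K-1-c) 2)/2"
  proof -
    have "(\<Sum>b<Suc (K-1). real (min (c+b+2) (2*K-c-b)) * (-3::real)^(K-1-b))
        = (\<Sum>b<Suc (K-1). real (min (c+(K-1-b)+2) (2*K-c-(K-1-b))) * (-3)^b)"
      by (rule reflsum)
    also have "\<dots> = SM K K (K-1-c) 2" unfolding SM_def
      by (subst K1[symmetric], rule sum.cong) (use assms in \<open>auto simp: min_def\<close>)
    finally have "(\<Sum>b<K. real (min (c+b+2) (2*K-c-b)) * (-3::real)^(K-1-b)) = SM K K (K-1-c) 2"
      using K1 by metis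
    then show ?thesis unfolding xl_def split_x by (simp add: SM_def)
  qed
  have d': "2 * (\<Sum>b<K. real (min (c+b+2) (2*K-c-b)) * xl K b) = SM K K c 2 + SM K K (K-1-c) 2"
    unfolding d by simp
  show ?thesis unfolding a b d' using identII[OF assms(1)] .
qed

lemma posSum: assumes "1 \<le> K"
  shows "(\<Sum>a<K+1. xs K a) + 3 * (\<Sum>b<K. xl K b) = 1"
proof -
  have K1: "K = Suc (K-1)" using assms by simp
  have a: "(\<Sum>a<Suc K. (-3::real)^(K-a)) = (\<Sum>a<Suc K. (-3)^a)"
    using reflsum[of "\<lambda>_. 1" K] by simp
  have b: "(\<Sum>a<Suc (K-1). (-3::real)^(K-1-a)) = (\<Sum>a<Suc (K-1). (-3)^a)"
    using reflsum[of "\<lambda>_. 1" "K-1"] by simp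
  have "(\<Sum>a<K+1. xs K a) = ((\<Sum>a<Suc K. (-3::real)^a) + (\<Sum>a<Suc K. (-3)^(K-a)))/2"
    unfolding xs_def by (simp add: sum.distrib sum_divide_distrib[symmetric])
  also have "\<dots> = QQ (Suc K)" unfolding a geomQ by simp
  finally have 1: "(\<Sum>a<K+1. xs K a) = QQ (Suc K)" .
  have "(\<Sum>b<K. xl K b) = ((\<Sum>a<Suc (K-1). (-3::real)^a) + (\<Sum>a<Suc (K-1). (-3)^(K-1-a)))/2"
    unfolding xl_def using K1 by (metis (no_types) sum.distrib sum_divide_distrib)
  also have "\<dots> = QQ K" unfolding b geomQ using K1 by simp
  finally have 2: "(\<Sum>b<K. xl K b) = QQ K" .
  show ?thesis unfolding 1 2 QQ_def by (simp add: field_simps)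
qed


definition fc :: "nat \<Rightarrow> nat \<times> nat \<Rightarrow> nat \<times> nat \<Rightarrow> nat" where
  "fc K u v = (case u of (p,a) \<Rightarrow> case v of (q,b) \<Rightarrow>
     (if p = 0 \<and> q = 0 then dabs a b
      else if p = 0 \<or> q = 0 then min (a+b+1) (2*K-a-b)
      else if p = q then dabs a b else min (a+b+2) (2*K-a-b)))"

definition coord :: "nat \<Rightarrow> nat \<Rightarrow> nat \<times> nat" where
  "coord K v = (if v = 0 then (0,0) else if v = 1 then (0,K) else if v \<le> K then (0, v-1)
     else (Suc ((v - Suc K) div K), (v - Suc K) mod K))"

definition valid :: "nat \<Rightarrow> nat \<times> nat \<Rightarrow> bool" where
  "valid K u = (case u of (p,a) \<Rightarrow> (p = 0 \<and> a \<le> K) \<or> (1 \<le> p \<and> p \<le> 3 \<and> a < K))"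

definition Lp :: "nat \<Rightarrow> nat \<Rightarrow> nat list" where
  "Lp K t = (if t = 0 then [0] @ [2..<Suc K] @ [1]
             else [0] @ [Suc K + (t-1)*K ..< Suc K + (t-1)*K + K] @ [1])"

lemma basket_paths_Lp: "set (basket_paths (Suc K)) = {Lp K 0, Lp K 1, Lp K 2, Lp K 3}"
proof -
  have e3: "[0..<3] = [0::nat,1,2]" by (simp add: upt_rec)
  show ?thesis unfolding basket_paths_def e3 by (simp add: Lp_def algebra_simps del: upt_Suc)
qed

lemma nth_gen: "i \<le> m + 1 \<Longrightarrow> ([0] @ [s..<s+m] @ [1::nat]) ! i = (if i = 0 then 0 else if i \<le> m then s+i-1 else 1)"
  by (auto simp: nth_append)

lemma len_Lp: "K \<ge> 1 \<Longrightarrow> length (Lp K t) = (if t = 0 then K + 1 else K + 2)"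
  by (simp add: Lp_def del: upt_Suc)

lemma coord_Lp0: assumes "K \<ge> 2" "i \<le> K" shows "coord K (Lp K 0 ! i) = (0, i)"
proof -
  have "Lp K 0 = [0] @ [2..<2+(K-1)] @ [1]" using assms by (simp add: Lp_def)
  then have "Lp K 0 ! i = (if i=0 then 0 else if i \<le> K-1 then 2+i-1 else 1)"
    using assms by (simp only:) (rule nth_gen, simp)
  then show ?thesis using assms by (simp add: coord_def; arith)
qed

lemma coord_LpS: assumes "K \<ge> 2" "i \<le> K + 1" "1 \<le> t" "t \<le> 3"
  shows "coord K (Lp K t ! i) = (if i = 0 then (0,0) else if i \<le> K then (t, i-1) else (0,K))"
proof -
  have "Lp K t = [0] @ [Suc K + (t-1)*K..<Suc K + (t-1)*K + K] @ [1]" using assms by (simp add: Lp_def)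
  then have e: "Lp K t ! i = (if i = 0 then 0 else if i \<le> K then Suc K + (t-1)*K + i - 1 else 1)"
    using assms by (simp only:) (rule nth_gen, simp)
  have "1 \<le> i \<Longrightarrow> i \<le> K \<Longrightarrow> (Suc K + (t-1)*K + i - 1 - Suc K) = (i-1) + (t-1)*K" by simp
  moreover have "1 \<le> i \<Longrightarrow> i \<le> K \<Longrightarrow> ((i-1) + (t-1)*K) div K = t-1"
    using assms div_mult_self1[of K "i-1" "t-1"] by simp
  moreover have "1 \<le> i \<Longrightarrow> i \<le> K \<Longrightarrow> ((i-1) + (t-1)*K) mod K = i-1"
    using assms mod_mult_self1[of "i-1" "t-1" K] by simp
  ultimately show ?thesis using assms unfolding e coord_def by auto
qed

lemma l1: "valid K (q,c) \<Longrightarrow> i < K \<Longrightarrow> fc K (q,c) (0,i) \<le> fc K (q,c) (0,Suc i) + 1 \<and> fc K (q,c) (0,Suc i) \<le> fc K (q,c) (0,i) + 1"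
  by (auto simp: fc_def valid_def dabs_def min_def)
lemma l2: "valid K (q,c) \<Longrightarrow> 1 \<le> t \<Longrightarrow> t \<le> 3 \<Longrightarrow> K \<ge> 2 \<Longrightarrow> fc K (q,c) (0,0) \<le> fc K (q,c) (t,0) + 1 \<and> fc K (q,c) (t,0) \<le> fc K (q,c) (0,0) + 1"
  by (auto simp: fc_def valid_def dabs_def min_def)
lemma l3: "valid K (q,c) \<Longrightarrow> 1 \<le> t \<Longrightarrow> t \<le> 3 \<Longrightarrow> Suc i < K \<Longrightarrow> fc K (q,c) (t,i) \<le> fc K (q,c) (t,Suc i) + 1 \<and> fc K (q,c) (t,Suc i) \<le> fc K (q,c) (t,i) + 1"
  by (auto simp: fc_def valid_def dabs_def min_def)
lemma l4: "valid K (q,c) \<Longrightarrow> 1 \<le> t \<Longrightarrow> t \<le> 3 \<Longrightarrow> K \<ge> 2 \<Longrightarrow> fc K (q,c) (t,K-1) \<le> fc K (q,c) (0,K) + 1 \<and> fc K (q,c) (0,K) \<le> fc K (q,c) (t,K-1) + 1"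
  by (auto simp: fc_def valid_def dabs_def min_def)

lemma lip: assumes "valid K u" "K \<ge> 2" "t \<le> 3" "Suc i < length (Lp K t)"
  shows "fc K u (coord K (Lp K t ! i)) \<le> fc K u (coord K (Lp K t ! Suc i)) + 1 \<and>
         fc K u (coord K (Lp K t ! Suc i)) \<le> fc K u (coord K (Lp K t ! i)) + 1"
proof -
  obtain q c where u: "u = (q,c)" by fastforce
  show ?thesis
  proof (cases "t = 0")
    case True
    then have "Suc i \<le> K" using assms len_Lp[of K t] by simp
    then show ?thesis using True assms coord_Lp0[of K i] coord_Lp0[of K "Suc i"] l1[of K q c i] u by simp
  next
    case False
    then have t: "1 \<le> t" "t \<le> 3" "Suc i \<le> K + 1" using assms len_Lp[of K t] by auto
    have c1: "coord K (Lp K t ! i) = (if i = 0 then (0,0) else if i \<le> K then (t, i-1) else (0,K))"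
      using coord_LpS[of K i t] t assms by simp
    have c2: "coord K (Lp K t ! Suc i) = (if Suc i \<le> K then (t, i) else (0,K))"
      using coord_LpS[of K "Suc i" t] t assms by simp
    consider "i = 0" | "1 \<le> i" "Suc i \<le> K" | "i = K" using t by linarith
    then show ?thesis
    proof cases
      case 1 then show ?thesis using c1 c2 l2[of K q c t] u t assms by simp
    next
      case 2
      then obtain i' where i': "i = Suc i'" by (cases i) auto
      then show ?thesis using 2 c1 c2 l3[of K q c t i'] u t assms by simp
    next
      case 3 then show ?thesis using c1 c2 l4[of K q c t] u t assms by simp
    qed
  qed
qed

lemma adj_Lp: "basket_adj (Suc K) w v \<longleftrightarrow> (\<exists>t\<in>{0,1,2,3}. \<exists>i. Suc i < length (Lp K t) \<and>
   ((Lp K t ! i = w \<and> Lp K t ! Suc i = v) \<or> (Lp K t ! i = v \<and> Lp K t ! Suc i = w)))"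
  unfolding basket_adj_def path_edges_adj_def basket_paths_Lp by blast

lemma walk_aux: assumes "t \<le> 3"
  shows "i + d < length (Lp K t) \<Longrightarrow> (basket_adj (Suc K) ^^ d) (Lp K t ! i) (Lp K t ! (i+d)) \<and>
            (basket_adj (Suc K) ^^ d) (Lp K t ! (i+d)) (Lp K t ! i)"
proof (induction d)
  case 0 then show ?case by simp
next
  case (Suc d)
  have e: "basket_adj (Suc K) (Lp K t ! (i+d)) (Lp K t ! Suc (i+d))"
          "basket_adj (Suc K) (Lp K t ! Suc (i+d)) (Lp K t ! (i+d))"
  proof -
    have "t \<in> {0,1,2,3}" using assms by auto
    moreover have "Suc (i+d) < length (Lp K t)" using Suc.prems by simp
    ultimately show "basket_adj (Suc K) (Lp K t ! (i+d)) (Lp K t ! Suc (i+d))"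
          "basket_adj (Suc K) (Lp K t ! Suc (i+d)) (Lp K t ! (i+d))"
      unfolding adj_Lp by blast+
  qed
  have ih: "(basket_adj (Suc K) ^^ d) (Lp K t ! i) (Lp K t ! (i+d))"
           "(basket_adj (Suc K) ^^ d) (Lp K t ! (i+d)) (Lp K t ! i)" using Suc by auto
  show ?case using relpowp_Suc_I[OF ih(1) e(1)] relpowp_Suc_I2[OF e(2) ih(2)] by simp
qed

lemma walk: assumes "t \<le> 3" "i < length (Lp K t)" "i' < length (Lp K t)"
  shows "(basket_adj (Suc K) ^^ dabs i i') (Lp K t ! i) (Lp K t ! i')"
proof (cases "i \<le> i'")
  case True then show ?thesis using walk_aux[OF assms(1), of i "i'-i"] assms by (simp add: dabs_def)
next
  case False then show ?thesis using walk_aux[OF assms(1), of i' "i-i'"] assms by (simp add: dabs_def)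
qed

lemma nth_Lp0: assumes "K \<ge> 1" "i \<le> K"
  shows "Lp K 0 ! i = (if i = 0 then 0 else if i < K then i + 1 else 1)"
proof -
  have "Lp K 0 = [0] @ [2..<2+(K-1)] @ [1]" using assms by (simp add: Lp_def)
  then have "Lp K 0 ! i = (if i=0 then 0 else if i \<le> K-1 then 2+i-1 else 1)"
    using assms by (simp only:) (rule nth_gen, simp)
  then show ?thesis using assms by auto
qed

lemma nth_LpS: assumes "1 \<le> t" "i \<le> K + 1"
  shows "Lp K t ! i = (if i = 0 then 0 else if i \<le> K then Suc K + (t-1)*K + i - 1 else 1)"
proof -
  have "Lp K t = [0] @ [Suc K + (t-1)*K..<Suc K + (t-1)*K + K] @ [1]" using assms by (simp add: Lp_def)
  then show ?thesis using assms by (simp only:) (rule nth_gen, simp)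
qed

definition idx :: "nat \<times> nat \<Rightarrow> nat" where "idx u = (if fst u = 0 then snd u else Suc (snd u))"

lemma repr: assumes "K \<ge> 2" "v < 4*K+1"
  shows "valid K (coord K v) \<and> v = Lp K (fst (coord K v)) ! idx (coord K v)"
proof -
  consider "v = 0" | "v = 1" | "2 \<le> v" "v \<le> K" | "K < v" by linarith
  then show ?thesis
  proof cases
    case 1 then show ?thesis using assms nth_Lp0[of K 0] by (simp add: coord_def valid_def idx_def)
  next
    case 2 then show ?thesis using assms nth_Lp0[of K K] by (simp add: coord_def valid_def idx_def)
  next
    case 3 then show ?thesis using assms nth_Lp0[of K "v-1"] by (simp add: coord_def valid_def idx_def)
  next
    case 4
    define m where "m = v - Suc K"
    have m: "m < 3*K" "v = Suc K + m" using 4 assms by (auto simp: m_def)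
    have j: "m div K < 3" using m by (simp add: div_less_iff_less_mult mult.commute)
    have b: "m mod K < K" using assms by simp
    have cv: "coord K v = (Suc (m div K), m mod K)" using 4 assms by (simp add: coord_def m_def)
    have "Lp K (Suc (m div K)) ! Suc (m mod K) = Suc K + (m div K)*K + m mod K"
      using nth_LpS[of "Suc (m div K)" "Suc (m mod K)" K] b by simp
    also have "\<dots> = v" using m by simp
    finally show ?thesis using cv j b by (simp add: valid_def idx_def)
  qed
qed

lemma fc_refl: "fc K u u = 0"
  by (cases u) (simp add: fc_def dabs_def)

lemma lower: assumes "K \<ge> 2" "valid K (coord K u)"
  shows "(basket_adj (Suc K) ^^ m) u v \<Longrightarrow> fc K (coord K u) (coord K v) \<le> m"
proof (induction m arbitrary: v)
  case 0 then show ?case by (simp add: fc_refl)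
next
  case (Suc m)
  from Suc.prems obtain y where y: "(basket_adj (Suc K) ^^ m) u y" "basket_adj (Suc K) y v"
    by (rule relpowp_Suc_E)
  from y(2) obtain t i where t0: "t \<in> {0,1,2,3}" and t: "Suc i < length (Lp K t)"
    "(Lp K t ! i = y \<and> Lp K t ! Suc i = v) \<or> (Lp K t ! i = v \<and> Lp K t ! Suc i = y)"
    unfolding adj_Lp by blast
  have t3: "t \<le> 3" using t0 by auto
  have "fc K (coord K u) (coord K v) \<le> fc K (coord K u) (coord K y) + 1"
    using lip[OF assms(2,1) t3 t(1)] t(2) by auto
  then show ?case using Suc.IH[OF y(1)] by simp
qed

lemma relpowp_trans: "(R ^^ a) x y \<Longrightarrow> (R ^^ b) y z \<Longrightarrow> (R ^^ (a+b)) x z"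
  by (auto simp: relpowp_add)

lemma Lp_first: "Lp K t ! 0 = 0" by (simp add: Lp_def)

lemma route_arith: assumes "valid K (q,c)" "valid K (p,b)" "q \<noteq> p" "K \<ge> 2"
  shows "fc K (q,c) (p,b) = idx (q,c) + idx (p,b) \<or>
         fc K (q,c) (p,b) = dabs (idx (q,c)) (if q = 0 then K else K+1) + dabs (if p = 0 then K else K+1) (idx (p,b))"
  using assms by (auto simp: fc_def valid_def idx_def dabs_def min_def)

lemma upper: assumes "K \<ge> 2" "u < 4*K+1" "v < 4*K+1"
  shows "(basket_adj (Suc K) ^^ fc K (coord K u) (coord K v)) u v"
proof -
  obtain q c where cu: "coord K u = (q,c)" by fastforce
  obtain p b where cv: "coord K v = (p,b)" by fastforce
  have ru: "valid K (q,c)" "u = Lp K q ! idx (q,c)" using repr[OF assms(1,2)] cu by auto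
  have rv: "valid K (p,b)" "v = Lp K p ! idx (p,b)" using repr[OF assms(1,3)] cv by auto
  have q3: "q \<le> 3" "p \<le> 3" using ru rv by (auto simp: valid_def)
  have li: "idx (q,c) < length (Lp K q)" "idx (p,b) < length (Lp K p)"
    using ru rv assms len_Lp[of K q] len_Lp[of K p] by (auto simp: valid_def idx_def)
  show ?thesis
  proof (cases "q = p")
    case True
    have "fc K (q,c) (p,b) = dabs (idx (q,c)) (idx (p,b))" using True ru rv
      by (auto simp: fc_def idx_def dabs_def valid_def)
    then show ?thesis using walk[OF q3(1) li(1)] li(2) True ru rv cu cv by simp
  next
    case False
    have w0: "(basket_adj (Suc K) ^^ (idx (q,c) + idx (p,b))) u v"
    proof -
      have 1: "(basket_adj (Suc K) ^^ dabs (idx (q,c)) 0) u 0"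
        using walk[OF q3(1) li(1), of 0] ru Lp_first[of K q] li by fastforce
      have 2: "(basket_adj (Suc K) ^^ dabs 0 (idx (p,b))) 0 v"
        using walk[OF q3(2) _ li(2), of 0] rv Lp_first[of K p] li by fastforce
      have "dabs (idx (q,c)) 0 + dabs 0 (idx (p,b)) = idx (q,c) + idx (p,b)" by (simp add: dabs_def)
      then show ?thesis using relpowp_trans[OF 1 2] by metis
    qed
    define eq where "eq = (if q = 0 then K else K+1)"
    define ep where "ep = (if p = 0 then K else K+1)"
    have eql: "eq < length (Lp K q)" "ep < length (Lp K p)"
      using len_Lp[of K q] len_Lp[of K p] assms by (auto simp: eq_def ep_def)
    have last: "Lp K q ! eq = 1" "Lp K p ! ep = 1"
      using nth_Lp0[of K K] nth_LpS[of q "K+1" K] nth_LpS[of p "K+1" K] assms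
      by (auto simp: eq_def ep_def)
    have w1: "(basket_adj (Suc K) ^^ (dabs (idx (q,c)) eq + dabs ep (idx (p,b)))) u v"
    proof -
      have 1: "(basket_adj (Suc K) ^^ dabs (idx (q,c)) eq) u 1"
        using walk[OF q3(1) li(1) eql(1)] ru last by simp
      have 2: "(basket_adj (Suc K) ^^ dabs ep (idx (p,b))) 1 v"
        using walk[OF q3(2) eql(2) li(2)] rv last by simp
      show ?thesis using relpowp_trans[OF 1 2] .
    qed
    show ?thesis using route_arith[OF ru(1) rv(1) False assms(1)] w0 w1 cu cv
      unfolding eq_def ep_def by auto
  qed
qed

lemma dist_fc: assumes "K \<ge> 2" "u < 4*K+1" "v < 4*K+1"
  shows "graph_dist (basket_adj (Suc K)) u v = fc K (coord K u) (coord K v)"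
  unfolding graph_dist_def
proof (rule Least_equality[where P="\<lambda>m. (basket_adj (Suc K) ^^ m) u v"])
  show "(basket_adj (Suc K) ^^ fc K (coord K u) (coord K v)) u v" by (rule upper[OF assms])
  show "\<And>m. (basket_adj (Suc K) ^^ m) u v \<Longrightarrow> fc K (coord K u) (coord K v) \<le> m"
    using lower[OF assms(1)] repr[OF assms(1,2)] by blast
qed


lemma reindex_short: assumes "K \<ge> 2"
  shows "(\<Sum>v<K+1. G (coord K v)) = (\<Sum>a<K+1. G (0,a))"
  by (rule sum.reindex_bij_witness[where j="\<lambda>v. snd (coord K v)" and i="\<lambda>a. if a = 0 then 0 else if a = K then 1 else a+1"])
     (use assms in \<open>auto simp: coord_def\<close>)

lemma coord_long: assumes "K \<ge> 2" "j \<in> {1,2,3}" "b < K"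
  shows "coord K (Suc K + (j-1)*K + b) = (j, b)"
proof -
  have "(Suc K + (j-1)*K + b) - Suc K = b + (j-1)*K" by simp
  moreover have "(b + (j-1)*K) div K = j - 1" using assms div_mult_self1[of K b "j-1"] by simp
  moreover have "(b + (j-1)*K) mod K = b" using assms mod_mult_self1[of b "j-1" K] by simp
  ultimately show ?thesis using assms unfolding coord_def by auto
qed

lemma reindex_long: assumes "K \<ge> 2"
  shows "(\<Sum>v\<in>{K+1..<4*K+1}. G (coord K v)) = (\<Sum>p\<in>{1,2,3::nat} \<times> {..<K}. G p)"
proof (rule sum.reindex_bij_witness[where j="\<lambda>v. coord K v" and i="\<lambda>p. Suc K + (fst p - 1)*K + snd p"])
  fix v assume v: "v \<in> {K+1..<4*K+1}"
  define m where "m = v - Suc K"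
  have m: "m < 3*K" "v = Suc K + m" using v assms by (auto simp: m_def)
  have j: "m div K < 3" using m by (simp add: div_less_iff_less_mult mult.commute)
  have b: "m mod K < K" using assms by simp
  have cv: "coord K v = (Suc (m div K), m mod K)" using v assms by (simp add: coord_def m_def)
  show "Suc K + (fst (coord K v) - 1) * K + snd (coord K v) = v" using cv m
    by (simp add: add.commute)
  show "coord K v \<in> {1,2,3} \<times> {..<K}" using cv j b by auto
next
  fix p :: "nat \<times> nat" assume p: "p \<in> {1,2,3} \<times> {..<K}"
  then show "coord K (Suc K + (fst p - 1) * K + snd p) = p"
    using coord_long[OF assms, of "fst p" "snd p"] by (cases p) auto
  show "Suc K + (fst p - 1) * K + snd p \<in> {K+1..<4*K+1}" using p assms
    by auto
qed simp

lemma full_reindex: assumes "K \<ge> 2"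
  shows "(\<Sum>v<4*K+1. G (coord K v)) = (\<Sum>a<K+1. G (0,a)) + ((\<Sum>b<K. G (1,b)) + ((\<Sum>b<K. G (2,b)) + (\<Sum>b<K. G (3,b))))"
proof -
  have "(\<Sum>v<4*K+1. G (coord K v)) = (\<Sum>v<K+1. G (coord K v)) + (\<Sum>v\<in>{K+1..<4*K+1}. G (coord K v))"
    by (rule sum_split_at) simp
  also have "\<dots> = (\<Sum>a<K+1. G (0,a)) + (\<Sum>p\<in>{1,2,3::nat} \<times> {..<K}. G p)"
    by (simp only: reindex_short[OF assms] reindex_long[OF assms])
  also have "(\<Sum>p\<in>{1,2,3::nat} \<times> {..<K}. G p) = (\<Sum>j\<in>{1,2,3::nat}. \<Sum>b<K. G (j,b))"
    by (simp add: sum.cartesian_product)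
  finally show ?thesis by simp
qed

definition xval :: "nat \<Rightarrow> nat \<times> nat \<Rightarrow> real" where
  "xval K p = (if fst p = 0 then xs K (snd p) else xl K (snd p))"

theorem lemma2p2:
  fixes k :: nat
  assumes "k \<ge> 3"
  shows "\<exists>x :: nat \<Rightarrow> real.
           (\<Sum>j<basket_n k. x j) = 1 \<and>
           (\<forall>i<basket_n k. (\<Sum>j<basket_n k. basket_D k i j * x j)
                = ((-3::real)^k + 4 * real k - 1) / 8)"
proof -
  define K where "K = k - 1"
  have k: "k = Suc K" and K2: "K \<ge> 2" using assms by (auto simp: K_def)
  have n: "basket_n k = 4*K+1" using assms by (simp add: basket_n_def K_def)
  define x where "x v = xval K (coord K v)" for v
  have sum1: "(\<Sum>j<basket_n k. x j) = 1"
  proof -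
    have "(\<Sum>j<basket_n k. x j) = (\<Sum>a<K+1. xs K a) + 3 * (\<Sum>b<K. xl K b)"
      unfolding n x_def full_reindex[OF K2] by (simp add: xval_def)
    then show ?thesis using posSum[of K] K2 by simp
  qed
  have rows: "(\<Sum>j<basket_n k. basket_D k i j * x j) = ((-3::real)^k + 4 * real k - 1) / 8"
    if i: "i < basket_n k" for i
  proof -
    obtain q c where cu: "coord K i = (q,c)" by fastforce
    have vq: "valid K (q,c)" using repr[OF K2, of i] i n cu by simp
    have "(\<Sum>j<basket_n k. basket_D k i j * x j) = (\<Sum>j<4*K+1. real (fc K (q,c) (coord K j)) * xval K (coord K j))"
      unfolding n
      by (rule sum.cong[OF refl]) (use i n cu K2 in \<open>simp add: basket_D_def x_def k dist_fc\<close>)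
    also have "\<dots> = (\<Sum>a<K+1. real (fc K (q,c) (0,a)) * xval K (0,a)) +
       ((\<Sum>b<K. real (fc K (q,c) (1,b)) * xval K (1,b)) + ((\<Sum>b<K. real (fc K (q,c) (2,b)) * xval K (2,b))
        + (\<Sum>b<K. real (fc K (q,c) (3,b)) * xval K (3,b))))"
      by (rule full_reindex[OF K2])
    also have "\<dots> = ((-3)^(K+1) + 4*real K + 3)/8"
    proof (cases "q = 0")
      case True
      then have c: "c \<le> K" using vq by (simp add: valid_def)
      show ?thesis using posI[OF c] K2 True by (simp add: fc_def xval_def)
    next
      case False
      then have c: "c < K" and q: "q \<in> {1,2,3}" using vq by (auto simp: valid_def)
      show ?thesis using posII[OF c] q False by (auto simp: fc_def xval_def)
    qed
    finally show ?thesis unfolding k by simp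
  qed
  show ?thesis using sum1 rows by blast
qed

end
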